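(* Let $A\in\mathcal A$ and let $\{q_n\}\subset\mathcal K$ satisfy $|\bar q_n|\to\infty$. Then $\displaystyle\lim_{n\to\infty}\int_0^T\dot q_n(t)\cdot A(t,q_n(t))\,dt=0$.
   Context: $T>0$ fixed. $\mathcal A$ is the set of $A\in\mathcal C^1(\mathbb R^4;\mathbb R^3)$, $A=A(t,x)$, $T$-periodic in $t$, with $\partial_tA\not\equiv0$ and $\lim_{|x|\to\infty}(|\partial_tA(t,x)|+|\nabla A(t,x)|)=0$ uniformly in $t$ ($\nabla A$ = spatial Jacobian). $\mathcal W$ = Lipschitz $T$-periodic $q:\mathbb R\to\mathbb R^3$; $\mathcal K=\{q\in\mathcal W:\|\dot q\|_\infty\le1\}$; $\bar q=\frac1T\int_0^Tq(t)dt$. *)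

theory Defs
  imports "HOL-Analysis.Analysis"
begin

text \<open>C^1 on R^4 = R x R^3: everywhere Frechet differentiable with continuous derivative D.
  The partial t-derivative is D(t,x)(1,0), the spatial Jacobian is h \<mapsto> D(t,x)(0,h).\<close>

definition class_A :: "real \<Rightarrow> (real \<Rightarrow> real^3 \<Rightarrow> real^3) \<Rightarrow> bool" where
  "class_A T A \<longleftrightarrow>
     (\<exists>D :: real \<times> (real^3) \<Rightarrow> (real \<times> (real^3)) \<Rightarrow>\<^sub>L (real^3).
        (\<forall>p. ((\<lambda>p. A (fst p) (snd p)) has_derivative blinfun_apply (D p)) (at p))
      \<and> continuous_on UNIV D
      \<and> (\<forall>t x. A (t + T) x = A t x)
      \<and> (\<exists>t x. blinfun_apply (D (t, x)) (1, 0) \<noteq> 0)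
      \<and> (\<forall>e>0. \<exists>R. \<forall>t x. norm x \<ge> R \<longrightarrow>
            norm (blinfun_apply (D (t, x)) (1, 0))
            + onorm (\<lambda>h. blinfun_apply (D (t, x)) (0, h)) < e))"

definition in_K :: "real \<Rightarrow> (real \<Rightarrow> real^3) \<Rightarrow> (real \<Rightarrow> real^3) \<Rightarrow> bool" where
  "in_K T q qd \<longleftrightarrow>
     (\<exists>L. L-lipschitz_on UNIV q)
   \<and> (\<forall>t. q (t + T) = q t)
   \<and> (AE t in lebesgue. (q has_vector_derivative qd t) (at t))
   \<and> (AE t in lebesgue. norm (qd t) \<le> 1)"

definition mean :: "real \<Rightarrow> (real \<Rightarrow> real^3) \<Rightarrow> real^3" where
  "mean T q = (1 / T) *\<^sub>R integral {0..T} q"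

end

theory Submission
  imports Defs
begin

lemma AE_negl:
  assumes "AE x in lebesgue. P x"
  obtains N where "negligible N" "\<And>x. x \<notin> N \<Longrightarrow> P x"
proof -
  from assms obtain N where N: "{x \<in> space lebesgue. \<not> P x} \<subseteq> N" "emeasure lebesgue N = 0" "N \<in> sets lebesgue"
    by (rule AE_E)
  then have "negligible N" by (simp add: negligible_iff_null_sets null_sets_def)
  moreover have "\<And>x. x \<notin> N \<Longrightarrow> P x" using N(1) by auto
  ultimately show ?thesis using that by blast
qed

lemma dct_ae:
  fixes f :: "nat \<Rightarrow> real \<Rightarrow> 'm::euclidean_space"
  assumes fi: "\<And>k. f k integrable_on {a..b}"
    and le: "\<And>k x. x \<in> {a..b} \<Longrightarrow> norm (f k x) \<le> C"
    and conv: "AE x in lebesgue. (\<lambda>k. f k x) \<longlonglongrightarrow> g x"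
  shows "g integrable_on {a..b}" "(\<lambda>k. integral {a..b} (f k)) \<longlonglongrightarrow> integral {a..b} g"
proof -
  obtain N where N: "negligible N" "\<And>x. x \<notin> N \<Longrightarrow> (\<lambda>k. f k x) \<longlonglongrightarrow> g x"
    using AE_negl[OF conv] by metis
  define f' where "f' k x = (if x \<in> N then 0 else f k x)" for k x
  define g' where "g' x = (if x \<in> N then 0 else g x)" for x
  have fi': "f' k integrable_on {a..b}" for k
    by (rule integrable_spike[OF fi N(1)]) (auto simp: f'_def)
  have le': "norm (f' k x) \<le> C" if "x \<in> {a..b}" for k x
    using le[OF that, of k] le[OF that, of 0] by (auto simp: f'_def intro: order_trans[OF norm_ge_zero])
  have conv': "(\<lambda>k. f' k x) \<longlonglongrightarrow> g' x" for x
    using N(2)[of x] by (auto simp: f'_def g'_def)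
  have h: "(\<lambda>x. C) integrable_on {a..b}" by (intro integrable_continuous_real continuous_intros)
  note D = dominated_convergence[OF fi' h le' conv']
  have eqf: "integral {a..b} (f k) = integral {a..b} (f' k)" for k
    by (rule integral_spike[OF N(1)]) (auto simp: f'_def)
  have eqg: "integral {a..b} g = integral {a..b} g'"
    by (rule integral_spike[OF N(1)]) (auto simp: g'_def)
  show "g integrable_on {a..b}"
    by (rule integrable_spike[OF D(1) N(1)]) (auto simp: g'_def)
  show "(\<lambda>k. integral {a..b} (f k)) \<longlonglongrightarrow> integral {a..b} g"
    using D(2) by (simp add: eqf eqg)
qed

lemma seq_deriv:
  fixes g :: "real \<Rightarrow> 'a::real_normed_vector"
  assumes "(g has_vector_derivative D) (at x)" "d \<longlonglongrightarrow> 0" "\<And>k. d k \<noteq> 0"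
  shows "(\<lambda>k. (1 / d k) *\<^sub>R (g (x + d k) - g x)) \<longlonglongrightarrow> D"
proof (rule LIMSEQ_I)
  fix e :: real assume e: "e > 0"
  from assms(1) have "(\<forall>e>0. \<exists>r>0. \<forall>y. norm(y - x) < r \<longrightarrow> norm (g y - g x - (y - x) *\<^sub>R D) \<le> e * norm (y - x))"
    unfolding has_vector_derivative_def has_derivative_at_alt by blast
  then obtain r where r: "r > 0" "\<And>y. norm(y - x) < r \<Longrightarrow> norm (g y - g x - (y - x) *\<^sub>R D) \<le> (e/2) * norm (y - x)"
    using e by (metis half_gt_zero)
  obtain M where M: "\<And>k. k \<ge> M \<Longrightarrow> norm (d k) < r"
    using LIMSEQ_D[OF assms(2) r(1)] by auto
  show "\<exists>no. \<forall>n\<ge>no. norm ((1 / d n) *\<^sub>R (g (x + d n) - g x) - D) < e"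
  proof (intro exI allI impI)
    fix k assume "k \<ge> M"
    then have 1: "norm (g (x + d k) - g x - d k *\<^sub>R D) \<le> (e/2) * norm (d k)"
      using r(2)[of "x + d k"] M by auto
    have "(1 / d k) *\<^sub>R (g (x + d k) - g x) - D = (1 / d k) *\<^sub>R (g (x + d k) - g x - d k *\<^sub>R D)"
      using assms(3)[of k] by (simp add: algebra_simps)
    then have "norm ((1 / d k) *\<^sub>R (g (x + d k) - g x) - D) = norm (g (x + d k) - g x - d k *\<^sub>R D) / \<bar>d k\<bar>"
      by simp
    also have "\<dots> \<le> e/2"
      using 1 assms(3)[of k] by (simp add: divide_le_eq)
    finally show "norm ((1 / d k) *\<^sub>R (g (x + d k) - g x) - D) < e" using e by linarith
  qed
qed

lemma ftc_lip:
  fixes q qd :: "real \<Rightarrow> 'a::euclidean_space"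
  assumes lip: "L-lipschitz_on UNIV q"
    and der: "AE t in lebesgue. (q has_vector_derivative qd t) (at t)"
    and ab: "a \<le> b"
  shows "(qd has_integral (q b - q a)) {a..b}"
proof -
  define d where "d k = inverse (real (Suc k))" for k
  have dpos: "d k > 0" for k by (simp add: d_def)
  have d0: "d \<longlonglongrightarrow> 0" unfolding d_def by (rule LIMSEQ_inverse_real_of_nat)
  have qc: "continuous_on UNIV q" using lip by (rule lipschitz_on_continuous_on)
  define c where "c = a - 1"
  define Q where "Q u = integral {c..u} q" for u
  have HQ: "(Q has_vector_derivative q x) (at x)" if "x > c" for x
  proof -
    have "(Q has_vector_derivative q x) (at x within {c..x+1})"
      unfolding Q_def by (rule integral_has_vector_derivative) (use that qc continuous_on_subset in auto)
    moreover have "at x within {c..x+1} = at x"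
      by (rule at_within_interior) (use that in auto)
    ultimately show ?thesis by simp
  qed
  have shift: "((\<lambda>u. q (u + e)) has_integral (Q (b + e) - Q (a + e))) {a..b}" if "e \<ge> 0" for e
  proof -
    have "(q has_integral (Q (b + e) - Q (a + e))) {a + e..b + e}"
      by (rule fundamental_theorem_of_calculus) (use ab that c_def in \<open>auto intro!: has_vector_derivative_at_within HQ\<close>)
    then have "((q \<circ> (+) e) has_integral (Q (b + e) - Q (a + e))) {a..b}"
      using has_integral_shift_Icc_real by (metis add.commute)
    then show ?thesis by (simp add: o_def add.commute)
  qed
  define f where "f k u = (1 / d k) *\<^sub>R (q (u + d k) - q u)" for k u
  have Hk: "(f k has_integral ((1 / d k) *\<^sub>R (Q (b + d k) - Q b) - (1 / d k) *\<^sub>R (Q (a + d k) - Q a))) {a..b}" for k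
  proof -
    have "((\<lambda>u. q (u + d k) - q (u + 0)) has_integral ((Q (b + d k) - Q (a + d k)) - (Q (b + 0) - Q (a + 0)))) {a..b}"
      by (intro has_integral_diff shift) (use dpos[of k] in auto)
    then have "(f k has_integral (1 / d k) *\<^sub>R ((Q (b + d k) - Q (a + d k)) - (Q b - Q a))) {a..b}"
      unfolding f_def by (intro has_integral_cmul) simp
    then show ?thesis by (simp add: algebra_simps)
  qed
  have fi: "f k integrable_on {a..b}" for k using Hk by blast
  have le: "norm (f k x) \<le> L" for k x
  proof -
    have "dist (q (x + d k)) (q x) \<le> L * dist (x + d k) x"
      using lip unfolding lipschitz_on_def by blast
    then have "norm (q (x + d k) - q x) \<le> L * d k" using dpos[of k] by (simp add: dist_norm)
    then show ?thesis using dpos[of k] by (simp add: f_def divide_le_eq mult.commute)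
  qed
  have conv: "AE x in lebesgue. (\<lambda>k. f k x) \<longlonglongrightarrow> qd x"
    using der by eventually_elim (unfold f_def, rule seq_deriv[OF _ d0], use dpos in \<open>auto simp: less_imp_neq[symmetric]\<close>)
  note D = dct_ae[OF fi le conv]
  have "(\<lambda>k. integral {a..b} (f k)) \<longlonglongrightarrow> q b - q a"
  proof -
    have "(\<lambda>k. (1 / d k) *\<^sub>R (Q (b + d k) - Q b) - (1 / d k) *\<^sub>R (Q (a + d k) - Q a)) \<longlonglongrightarrow> q b - q a"
      by (intro tendsto_diff seq_deriv[OF _ d0] HQ) (use dpos ab c_def in \<open>auto simp: less_imp_neq[symmetric]\<close>)
    then show ?thesis by (simp only: Hk[THEN integral_unique])
  qed
  then have "integral {a..b} qd = q b - q a" using D(2) LIMSEQ_unique by blast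
  then show ?thesis using D(1) by (metis integrable_integral)
qed

lemma lip1:
  assumes "in_K T q qd"
  shows "norm (q t - q s) \<le> \<bar>t - s\<bar>"
proof -
  have key: "norm (q y - q x) \<le> y - x" if "x \<le> y" for x y
  proof -
    obtain L where lip: "L-lipschitz_on UNIV q" using assms unfolding in_K_def by blast
    have der: "AE t in lebesgue. (q has_vector_derivative qd t) (at t)" and bd: "AE t in lebesgue. norm (qd t) \<le> 1"
      using assms unfolding in_K_def by blast+
    have H: "(qd has_integral (q y - q x)) {x..y}" by (rule ftc_lip[OF lip der that])
    obtain N where N: "negligible N" "\<And>t. t \<notin> N \<Longrightarrow> norm (qd t) \<le> 1"
      using AE_negl[OF bd] by metis
    define g where "g t = (if t \<in> N then 0 else qd t)" for t
    have gi: "g integrable_on {x..y}" by (rule integrable_spike[OF _ N(1)]) (use H in \<open>auto simp: g_def\<close>)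
    have eq: "integral {x..y} qd = integral {x..y} g" by (rule integral_spike[OF N(1)]) (auto simp: g_def)
    have "norm (integral {x..y} g) \<le> integral {x..y} (\<lambda>t. 1::real)"
      by (rule integral_norm_bound_integral[OF gi]) (use N(2) in \<open>auto simp: g_def\<close>)
    then show ?thesis using H eq that by (simp add: integral_unique)
  qed
  show ?thesis
  proof (cases "s \<le> t")
    case True then show ?thesis using key[OF True] by simp
  next
    case False then show ?thesis using key[of t s] by (simp add: norm_minus_commute)
  qed
qed

lemma int_shift:
  fixes f :: "real \<Rightarrow> 'a::euclidean_space"
  assumes "continuous_on UNIV f"
  shows "integral {a..b} (\<lambda>t. f (t + c)) = integral {a+c..b+c} f"
proof -
  have "(f has_integral integral {a+c..b+c} f) {a+c..b+c}"
    by (rule integrable_integral, rule integrable_continuous_real) (use assms continuous_on_subset in blast)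
  then have "((f \<circ> (+) c) has_integral integral {a+c..b+c} f) {a..b}"
    using has_integral_shift_Icc_real by blast
  then show ?thesis by (simp add: o_def add.commute integral_unique)
qed

lemma per_int:
  fixes f :: "real \<Rightarrow> real"
  assumes fc: "continuous_on UNIV f" and per: "\<And>t. f (t + T) = f t" and e: "0 \<le> e" "e \<le> T"
  shows "integral {0..T} (\<lambda>t. f (t + e)) = integral {0..T} f"
proof -
  have ii: "f integrable_on {u..v}" for u v
    by (rule integrable_continuous_real) (use fc continuous_on_subset in blast)
  have "integral {0..T} (\<lambda>t. f (t + e)) = integral {e..T+e} f"
    using int_shift[OF fc] by simp
  also have "\<dots> = integral {e..T} f + integral {T..T+e} f"
    using Henstock_Kurzweil_Integration.integral_combine[of e T "T+e" f] ii e by simp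
  also have "integral {T..T+e} f = integral {0..e} f"
  proof -
    have "integral {0..e} (\<lambda>t. f (t + T)) = integral {0+T..e+T} f" by (rule int_shift[OF fc])
    then show ?thesis using per by (simp add: add.commute)
  qed
  also have "integral {e..T} f + integral {0..e} f = integral {0..T} f"
    using Henstock_Kurzweil_Integration.integral_combine[of 0 e T f] ii e by simp
  finally show ?thesis .
qed

lemma A_mvt:
  fixes A :: "real \<Rightarrow> real^3 \<Rightarrow> real^3"
    and D :: "real \<times> (real^3) \<Rightarrow> (real \<times> (real^3)) \<Rightarrow>\<^sub>L (real^3)"
  assumes deriv: "\<forall>p. ((\<lambda>p. A (fst p) (snd p)) has_derivative blinfun_apply (D p)) (at p)"
    and small: "\<And>t x. norm x \<ge> R \<Longrightarrow> norm (blinfun_apply (D (t, x)) (1, 0))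
            + onorm (\<lambda>h. blinfun_apply (D (t, x)) (0, h)) < e"
    and x1: "norm x1 \<ge> R + 1" and x21: "norm (x2 - x1) \<le> 1"
  shows "norm (A t2 x2 - A t1 x1) \<le> e * (\<bar>t2 - t1\<bar> + norm (x2 - x1))"
proof -
  define S where "S = (UNIV :: real set) \<times> cball x1 1"
  have cS: "convex S" unfolding S_def by (intro convex_Times convex_cball convex_UNIV)
  have bl: "bounded_linear (\<lambda>h. blinfun_apply (D p) (0, h))" for p
    by (rule bounded_linear_compose[OF blinfun.bounded_linear_right]) (intro bounded_linear_Pair bounded_linear_zero bounded_linear_ident)
  have on: "onorm (blinfun_apply (D p)) \<le> e" if "p \<in> S" for p
  proof -
    obtain t x where p: "p = (t, x)" by fastforce
    have "norm x \<ge> R"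
    proof -
      have "norm (x1 - x) \<le> 1" using that p by (simp add: S_def dist_norm)
      then show ?thesis using x1 norm_triangle_ineq2[of x1 x] by linarith
    qed
    note sm = small[OF this, of t]
    have o0: "0 \<le> onorm (\<lambda>h. blinfun_apply (D (t, x)) (0, h))" by (rule onorm_pos_le[OF bl])
    have e0: "0 \<le> e" using sm o0 norm_ge_zero[of "blinfun_apply (D (t, x)) (1, 0)"] by linarith
    show ?thesis unfolding p
    proof (rule onorm_bound[OF e0])
      fix v :: "real \<times> (real^3)"
      obtain \<tau> h where v: "v = (\<tau>, h)" by fastforce
      have "blinfun_apply (D (t, x)) v = \<tau> *\<^sub>R blinfun_apply (D (t, x)) (1, 0) + blinfun_apply (D (t, x)) (0, h)"
        unfolding v by (simp add: blinfun.scaleR_right[symmetric] blinfun.add_right[symmetric])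
      then have "norm (blinfun_apply (D (t, x)) v) \<le> \<bar>\<tau>\<bar> * norm (blinfun_apply (D (t, x)) (1, 0)) + onorm (\<lambda>h. blinfun_apply (D (t, x)) (0, h)) * norm h"
        using onorm[OF bl, of "(t,x)" h] norm_triangle_ineq[of "\<tau> *\<^sub>R blinfun_apply (D (t, x)) (1, 0)" "blinfun_apply (D (t, x)) (0, h)"]
        by simp
      also have "\<dots> \<le> norm v * norm (blinfun_apply (D (t, x)) (1, 0)) + onorm (\<lambda>h. blinfun_apply (D (t, x)) (0, h)) * norm v"
        using norm_fst_le[of \<tau> h] norm_snd_le[of h \<tau>] o0 unfolding v
        by (intro add_mono mult_right_mono mult_left_mono) auto
      also have "\<dots> = (norm (blinfun_apply (D (t, x)) (1, 0)) + onorm (\<lambda>h. blinfun_apply (D (t, x)) (0, h))) * norm v"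
        by (simp add: algebra_simps)
      also have "\<dots> \<le> e * norm v" using sm by (intro mult_right_mono) auto
      finally show "norm (blinfun_apply (D (t, x)) v) \<le> e * norm v" .
    qed
  qed
  have "norm ((\<lambda>p. A (fst p) (snd p)) (t2, x2) - (\<lambda>p. A (fst p) (snd p)) (t1, x1)) \<le> e * norm ((t2, x2) - (t1, x1))"
    by (rule differentiable_bound[OF cS _ on]) (use deriv x21 in \<open>auto simp: S_def dist_norm norm_minus_commute intro: has_derivative_at_withinI\<close>)
  also have "\<dots> \<le> e * (\<bar>t2 - t1\<bar> + norm (x2 - x1))"
  proof -
    have e0: "0 \<le> e"
      using small[of x1 0] onorm_pos_le[OF bl, of "(0,x1)"] x1 norm_ge_zero[of "blinfun_apply (D (0, x1)) (1, 0)"] by linarith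
    show ?thesis using norm_Pair_le[of "t2 - t1" "x2 - x1"] e0 by (simp add: mult_left_mono)
  qed
  finally show ?thesis by simp
qed

lemma mean_close:
  assumes T: "T > 0" and inK: "in_K T q qd" and t: "t \<in> {0..T+1}"
  shows "norm (q t - mean T q) \<le> T + 1"
proof -
  obtain L where lip: "L-lipschitz_on UNIV q" using inK unfolding in_K_def by blast
  have qc: "continuous_on UNIV q" using lip by (rule lipschitz_on_continuous_on)
  have qi: "q integrable_on {0..T}"
    by (rule integrable_continuous_real) (use qc continuous_on_subset in blast)
  have "integral {0..T} (\<lambda>s. q t - q s) = T *\<^sub>R q t - integral {0..T} q"
    using integral_diff[OF integrable_const_ivl qi, of "q t"] T by (simp add: integral_const_real)
  then have eq: "q t - mean T q = (1 / T) *\<^sub>R integral {0..T} (\<lambda>s. q t - q s)"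
  proof -
    have "(1 / T) *\<^sub>R integral {0..T} (\<lambda>s. q t - q s) = (1 / T) *\<^sub>R (T *\<^sub>R q t) - (1 / T) *\<^sub>R integral {0..T} q"
      by (simp only: \<open>integral {0..T} (\<lambda>s. q t - q s) = T *\<^sub>R q t - integral {0..T} q\<close> scaleR_diff_right)
    then show ?thesis using T by (simp add: mean_def)
  qed
  have "norm (integral {0..T} (\<lambda>s. q t - q s)) \<le> integral {0..T} (\<lambda>s. T + 1)"
  proof (rule integral_norm_bound_integral)
    show "(\<lambda>s. q t - q s) integrable_on {0..T}" by (intro integrable_diff integrable_const_ivl qi)
    show "(\<lambda>s. T + 1) integrable_on {0..T}" by (rule integrable_const_ivl)
    fix s assume "s \<in> {0..T}"
    then show "norm (q t - q s) \<le> T + 1" using lip1[OF inK, of t s] t by auto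
  qed
  also have "\<dots> = T * (T + 1)" using T by (simp add: integral_const_real)
  finally show ?thesis using T unfolding eq by (simp add: divide_le_eq mult.commute)
qed

lemma cont_shift:
  fixes f :: "real \<Rightarrow> 'a::topological_space"
  assumes "continuous_on UNIV f"
  shows "continuous_on UNIV (\<lambda>t. f (t + s))"
  by (rule continuous_on_compose2[of UNIV f UNIV "\<lambda>t. t + s"]) (use assms in \<open>auto intro!: continuous_intros\<close>)

lemma fixed_n:
  fixes A :: "real \<Rightarrow> real^3 \<Rightarrow> real^3"
    and D :: "real \<times> (real^3) \<Rightarrow> (real \<times> (real^3)) \<Rightarrow>\<^sub>L (real^3)"
    and q qd :: "real \<Rightarrow> real^3"
  assumes T: "T > 0"
    and deriv: "\<forall>p. ((\<lambda>p. A (fst p) (snd p)) has_derivative blinfun_apply (D p)) (at p)"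
    and perA: "\<And>t x. A (t + T) x = A t x"
    and small: "\<And>t x. norm x \<ge> R \<Longrightarrow> norm (blinfun_apply (D (t, x)) (1, 0))
            + onorm (\<lambda>h. blinfun_apply (D (t, x)) (0, h)) < e"
    and inK: "in_K T q qd"
    and big: "\<And>t. t \<in> {0..T+1} \<Longrightarrow> norm (q t) \<ge> R + 1"
  shows "\<bar>integral {0..T} (\<lambda>t. qd t \<bullet> A t (q t))\<bar> \<le> 2 * e * T * (T + 1)"
proof -
  have e0: "0 \<le> e"
  proof -
    have bl: "bounded_linear (\<lambda>h. blinfun_apply (D p) (0, h))" for p
      by (rule bounded_linear_compose[OF blinfun.bounded_linear_right]) (intro bounded_linear_Pair bounded_linear_zero bounded_linear_ident)
    have "norm (q 0) \<ge> R" using big[of 0] T by auto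
    then show ?thesis
      using small[of "q 0" 0] onorm_pos_le[OF bl, of "(0, q 0)"] norm_ge_zero[of "blinfun_apply (D (0, q 0)) (1, 0)"] by linarith
  qed
  obtain L where lip: "L-lipschitz_on UNIV q" using inK unfolding in_K_def by blast
  have qc: "continuous_on UNIV q" using lip by (rule lipschitz_on_continuous_on)
  have perq: "\<And>t. q (t + T) = q t" using inK unfolding in_K_def by blast
  have der: "AE t in lebesgue. (q has_vector_derivative qd t) (at t)" using inK unfolding in_K_def by blast
  have Ac: "continuous_on UNIV (\<lambda>p. A (fst p) (snd p))"
    by (intro continuous_at_imp_continuous_on ballI has_derivative_continuous) (use deriv in blast)
  define a where "a t = A t (q t)" for t
  have ac: "continuous_on UNIV a"
  proof -
    have "continuous_on UNIV ((\<lambda>p. A (fst p) (snd p)) \<circ> (\<lambda>t. (t, q t)))"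
      by (rule continuous_on_compose) (use Ac continuous_on_subset in \<open>auto intro!: continuous_intros qc\<close>)
    then show ?thesis by (simp add: a_def o_def)
  qed
  have pera: "a (t + T) = a t" for t by (simp add: a_def perA perq)
  obtain M where M: "\<And>t. t \<in> {0..T} \<Longrightarrow> norm (a t) \<le> M"
  proof -
    have "bounded (a ` {0..T})"
      by (rule compact_imp_bounded, rule compact_continuous_image) (use ac continuous_on_subset in auto)
    then obtain M0 where "\<forall>x\<in>a ` {0..T}. norm x \<le> M0" unfolding bounded_iff by blast
    then show ?thesis using that[of M0] by auto
  qed
  define c where "c = q 0"
  define d where "d k = min T 1 * inverse (real (Suc k))" for k
  have dpos: "d k > 0" for k using T by (simp add: d_def)
  have dT: "d k \<le> T" "d k \<le> 1" for k
  proof -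
    have "inverse (real (Suc k)) \<le> 1" by (simp add: inverse_le_1_iff)
    then have "min T 1 * inverse (real (Suc k)) \<le> min T 1"
      using T by (intro mult_left_le) auto
    then show "d k \<le> T" "d k \<le> 1" by (auto simp: d_def)
  qed
  have d0: "d \<longlonglongrightarrow> 0" unfolding d_def by (intro tendsto_mult_right_zero LIMSEQ_inverse_real_of_nat)
  define g where "g k t = (q (t + d k) - q t) \<bullet> a t" for k t
  define f where "f k t = (1 / d k) * g k t" for k t
  have gc: "continuous_on UNIV (g k)" for k
    unfolding g_def by (intro continuous_on_inner continuous_on_diff cont_shift[OF qc] qc ac)
  have gi: "g k integrable_on {u..v}" for k u v
    by (rule integrable_continuous_real) (use gc continuous_on_subset in blast)
  have fi: "f k integrable_on {0..T}" for k
    unfolding f_def by (intro integrable_on_mult_right gi)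
  have fle: "norm (f k t) \<le> M" if "t \<in> {0..T}" for k t
  proof -
    have "\<bar>g k t\<bar> \<le> norm (q (t + d k) - q t) * norm (a t)"
      unfolding g_def by (rule Cauchy_Schwarz_ineq2)
    also have "\<dots> \<le> d k * M"
      using lip1[OF inK, of "t + d k" t] dpos[of k] M[OF that] by (intro mult_mono) auto
    finally show ?thesis using dpos[of k] by (simp add: f_def divide_le_eq mult.commute)
  qed
  have conv: "AE t in lebesgue. (\<lambda>k. f k t) \<longlonglongrightarrow> qd t \<bullet> A t (q t)"
    using der
  proof eventually_elim
    case (elim t)
    have "(\<lambda>k. (1 / d k) *\<^sub>R (q (t + d k) - q t)) \<longlonglongrightarrow> qd t"
      by (rule seq_deriv[OF elim d0]) (use dpos in \<open>auto simp: less_imp_neq[symmetric]\<close>)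
    then have "(\<lambda>k. ((1 / d k) *\<^sub>R (q (t + d k) - q t)) \<bullet> a t) \<longlonglongrightarrow> qd t \<bullet> a t"
      by (intro tendsto_inner tendsto_const)
    then show ?case by (simp add: f_def g_def a_def)
  qed
  note DC = dct_ae[OF fi fle conv]
  have bound: "\<bar>integral {0..T} (f k)\<bar> \<le> 2 * e * T * (T + 1)" for k
  proof -
    let ?d = "d k"
    define h1 where "h1 t = (q (t + ?d) - c) \<bullet> (a t - a (t + ?d))" for t
    define p1 where "p1 t = q t \<bullet> a t" for t
    define p2 where "p2 t = c \<bullet> a t" for t
    have p1c: "continuous_on UNIV p1" unfolding p1_def by (intro continuous_on_inner qc ac)
    have p2c: "continuous_on UNIV p2" unfolding p2_def by (intro continuous_on_inner continuous_on_const ac)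
    have sh1c: "continuous_on UNIV (\<lambda>t. p1 (t + ?d))" by (rule cont_shift[OF p1c])
    have sh2c: "continuous_on UNIV (\<lambda>t. p2 (t + ?d))" by (rule cont_shift[OF p2c])
    have h1c: "continuous_on UNIV h1" unfolding h1_def
      by (intro continuous_on_inner continuous_on_diff cont_shift[OF qc] cont_shift[OF ac] qc ac continuous_on_const)
    have int: "F integrable_on {0..T}" if "continuous_on UNIV F" for F :: "real \<Rightarrow> real"
      by (rule integrable_continuous_real) (use that continuous_on_subset in blast)
    have pw: "g k t = h1 t + (p1 (t + ?d) - p1 t) - (p2 (t + ?d) - p2 t)" for t
      by (simp add: g_def h1_def p1_def p2_def inner_diff_left inner_diff_right algebra_simps)
    have z1: "integral {0..T} (\<lambda>t. p1 (t + ?d) - p1 t) = 0"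
      using per_int[OF p1c _ less_imp_le[OF dpos] dT(1), of k] integral_diff[OF int[OF sh1c] int[OF p1c]]
      by (simp add: p1_def pera perq)
    have z2: "integral {0..T} (\<lambda>t. p2 (t + ?d) - p2 t) = 0"
      using per_int[OF p2c _ less_imp_le[OF dpos] dT(1), of k] integral_diff[OF int[OF sh2c] int[OF p2c]]
      by (simp add: p2_def pera)
    have "integral {0..T} (g k) = integral {0..T} h1 + integral {0..T} (\<lambda>t. p1 (t + ?d) - p1 t) - integral {0..T} (\<lambda>t. p2 (t + ?d) - p2 t)"
      unfolding pw
      by (subst integral_diff, (intro integrable_add integrable_diff int h1c sh1c sh2c p1c p2c)+,
          subst integral_add, (intro integrable_add integrable_diff int h1c sh1c sh2c p1c p2c)+, simp)
    then have gh: "integral {0..T} (g k) = integral {0..T} h1" using z1 z2 by simp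
    have "norm (integral {0..T} h1) \<le> integral {0..T} (\<lambda>t. (T + 1) * (2 * e * ?d))"
    proof (rule integral_norm_bound_integral)
      show "h1 integrable_on {0..T}" by (rule int[OF h1c])
      show "(\<lambda>t. (T + 1) * (2 * e * ?d)) integrable_on {0..T}" by (rule integrable_const_ivl)
      fix t assume t: "t \<in> {0..T}"
      have n1: "norm (q (t + ?d) - c) \<le> T + 1"
        using lip1[OF inK, of "t + ?d" 0] t dT[of k] dpos[of k] by (auto simp: c_def)
      have qd1: "norm (q (t + ?d) - q t) \<le> ?d" using lip1[OF inK, of "t + ?d" t] dpos[of k] by simp
      have "norm (a (t + ?d) - a t) \<le> e * (\<bar>t + ?d - t\<bar> + norm (q (t + ?d) - q t))"
        unfolding a_def
        by (rule A_mvt[OF deriv small big]) (use t T qd1 dT[of k] in auto)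
      also have "\<dots> \<le> e * (?d + ?d)" using qd1 dpos[of k] e0 by (intro mult_left_mono) auto
      finally have n2: "norm (a t - a (t + ?d)) \<le> 2 * e * ?d" by (simp add: norm_minus_commute)
      have "norm (h1 t) \<le> norm (q (t + ?d) - c) * norm (a t - a (t + ?d))"
        unfolding h1_def real_norm_def by (rule Cauchy_Schwarz_ineq2)
      also have "\<dots> \<le> (T + 1) * (2 * e * ?d)" using n1 n2 T by (intro mult_mono) auto
      finally show "norm (h1 t) \<le> (T + 1) * (2 * e * ?d)" .
    qed
    also have "\<dots> = T * ((T + 1) * (2 * e * ?d))" using T by (simp add: integral_const_real)
    finally have "\<bar>integral {0..T} (g k)\<bar> \<le> T * ((T + 1) * (2 * e * ?d))" using gh by simp
    moreover have "integral {0..T} (f k) = (1 / ?d) * integral {0..T} (g k)"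
      unfolding f_def by (simp add: integral_mult_right)
    ultimately show ?thesis using dpos[of k]
      by (simp add: abs_mult divide_le_eq mult.commute mult.left_commute)
  qed
  have "(\<lambda>k. \<bar>integral {0..T} (f k)\<bar>) \<longlonglongrightarrow> \<bar>integral {0..T} (\<lambda>t. qd t \<bullet> A t (q t))\<bar>"
    by (intro tendsto_rabs DC(2))
  then show ?thesis
    by (rule tendsto_upperbound) (use bound in auto)
qed

theorem mainTheorem7:
  fixes T :: real and A :: "real \<Rightarrow> real^3 \<Rightarrow> real^3"
    and q qd :: "nat \<Rightarrow> real \<Rightarrow> real^3"
  assumes "T > 0"
    and "class_A T A"
    and "\<And>n. in_K T (q n) (qd n)"
    and "filterlim (\<lambda>n. norm (mean T (q n))) at_top sequentially"
  shows "(\<lambda>n. integral {0..T} (\<lambda>t. qd n t \<bullet> A t (q n t))) \<longlonglongrightarrow> 0"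
proof -
  note T = assms(1)
  obtain D :: "real \<times> (real^3) \<Rightarrow> (real \<times> (real^3)) \<Rightarrow>\<^sub>L (real^3)" where
    deriv: "\<forall>p. ((\<lambda>p. A (fst p) (snd p)) has_derivative blinfun_apply (D p)) (at p)"
    and perA: "\<forall>t x. A (t + T) x = A t x"
    and decay: "\<forall>e>0. \<exists>R. \<forall>t x. norm x \<ge> R \<longrightarrow>
            norm (blinfun_apply (D (t, x)) (1, 0))
            + onorm (\<lambda>h. blinfun_apply (D (t, x)) (0, h)) < e"
    using assms(2) unfolding class_A_def by blast
  show ?thesis
  proof (rule LIMSEQ_I)
    fix r :: real assume r: "r > 0"
    define e where "e = r / (4 * T * (T + 1))"
    have e: "e > 0" using r T by (simp add: e_def)
    obtain R where R: "\<And>t x. norm x \<ge> R \<Longrightarrow> norm (blinfun_apply (D (t, x)) (1, 0))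
            + onorm (\<lambda>h. blinfun_apply (D (t, x)) (0, h)) < e"
      using decay e by blast
    have "eventually (\<lambda>n. R + T + 2 \<le> norm (mean T (q n))) sequentially"
      using assms(4) unfolding filterlim_at_top by blast
    then obtain N where N: "\<And>n. n \<ge> N \<Longrightarrow> R + T + 2 \<le> norm (mean T (q n))"
      unfolding eventually_sequentially by blast
    show "\<exists>no. \<forall>n\<ge>no. norm (integral {0..T} (\<lambda>t. qd n t \<bullet> A t (q n t)) - 0) < r"
    proof (intro exI allI impI)
      fix n assume n: "n \<ge> N"
      have big: "norm (q n t) \<ge> R + 1" if t: "t \<in> {0..T+1}" for t
        using mean_close[OF T assms(3) t, of n] N[OF n] norm_triangle_ineq2[of "mean T (q n)" "q n t"]
        by (simp add: norm_minus_commute)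
      have "\<bar>integral {0..T} (\<lambda>t. qd n t \<bullet> A t (q n t))\<bar> \<le> 2 * e * T * (T + 1)"
        by (rule fixed_n[OF T deriv _ R assms(3) big]) (use perA in auto)
      also have "\<dots> = r / 2"
      proof -
        have p: "4 * T * (T + 1) \<noteq> 0" using T by simp
        have "e * (4 * T * (T + 1)) = r" using p by (simp add: e_def)
        moreover have "2 * e * T * (T + 1) = (e * (4 * T * (T + 1))) / 2" by (simp add: algebra_simps)
        ultimately show ?thesis by simp
      qed
      finally show "norm (integral {0..T} (\<lambda>t. qd n t \<bullet> A t (q n t)) - 0) < r" using r by simp
    qed
  qed
qed

end
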